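(* Let $M$ be a distance-based tree reconstruction method and suppose that for each $n$ it has $l_\infty$ safety radius $\rho_n>0$ on binary trees with $n$ leaves. Then for every $\eta>0$ and every $n$ there is $s_n>0$ such that $M$ has $\eta$-stochastic safety radius (at least) $s_n$ for all binary phylogenetic trees with $n$ leaves. Moreover, $s_n$ can be taken arbitrarily close to $\frac12\rho_n$ as $n\to\infty$: for every $\eta>0$ and every $\theta\in(0,1)$ there exists $N$ such that for all $n\ge N$, $M$ has $\eta$-stochastic safety radius at least $\theta\cdot\frac12\rho_n$ for all binary phylogenetic trees with $n$ leaves.
   Context: A phylogenetic $X$-tree is a tree whose leaves are bijectively labelled by the finite set $X$ and whose interior vertices have degree at least 3; it is binary if all interior vertices have degree 3. For a binary phylogenetic $X$-tree $T$ with positive edge lengths $w$, $d_{(T,w)}$ denotes the tree metric (path-length distance between leaves) and $w_{\min}$ the minimum length of an interior (non-pendant) edge. A distance-based tree reconstruction method $M$ assigns (measurably) to every finite set $X$ and every dissimilarity map $\delta:\{\{x,y\}:x\ne y\in X\}\to\mathbb{R}$ a phylogenetic $X$-tree topology $M(\delta)$; $M(\delta)=T$ means equality of (unrooted) topologies. $M$ has $l_\infty$ safety radius $\rho_n$ (on $n$-leaf trees) if for every binary phylogenetic $X$-tree $T$ with $|X|=n$ and positive edge lengths $w$, and every dissimilarity map $\delta$ on $X$, $\max_{x\ne y}|\delta(x,y)-d_{(T,w)}(x,y)|<\rho_n w_{\min}$ implies $M(\delta)=T$. Random errors model: $\delta(x,y)=d_{(T,w)}(x,y)+\epsilon_{xy}$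 with the $\epsilon_{xy}$ (one per unordered pair) independent $N(0,\sigma^2)$, where $\sigma^2=c^2/\log(n)$ for some $c\ne 0$ and $n=|X|$ ($\log$ the natural logarithm). For $\eta>0$, $M$ has $\eta$-stochastic safety radius $s$ (on $n$-leaf trees) if for every binary phylogenetic $X$-tree $T$ with $|X|=n$ and positive edge lengths, and $\delta$ drawn from the random errors model with parameter $c$, $c<s\cdot w_{\min}$ implies $\mathbb{P}(M(\delta)=T)\ge 1-\eta$. *)

theory Defs
  imports "HOL-Probability.Probability"
begin

text \<open>Phylogenetic X-trees are encoded as finite graphs (V, E) whose vertices have type
  'a + nat: the leaf labelled x is the vertex Inl x, interior vertices are Inr k.
  Edges are 2-element vertex sets.\<close>

type_synonym 'a vert = "'a + nat"
type_synonym 'a ptree = "'a vert set \<times> 'a vert set set"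

definition degree :: "'v set set \<Rightarrow> 'v \<Rightarrow> nat" where
  "degree E v = card {e \<in> E. v \<in> e}"

definition is_path :: "'v set set \<Rightarrow> 'v list \<Rightarrow> 'v \<Rightarrow> 'v \<Rightarrow> bool" where
  "is_path E p u v \<longleftrightarrow> p \<noteq> [] \<and> hd p = u \<and> last p = v \<and> distinct p \<and>
     (\<forall>i. Suc i < length p \<longrightarrow> {p ! i, p ! Suc i} \<in> E)"

definition path_edges :: "'v list \<Rightarrow> 'v set set" where
  "path_edges p = {{p ! i, p ! Suc i} | i. Suc i < length p}"

definition has_cycle :: "'v set set \<Rightarrow> bool" where
  "has_cycle E \<longleftrightarrow> (\<exists>p. 3 \<le> length p \<and> distinct p \<and>
     (\<forall>i. Suc i < length p \<longrightarrow> {p ! i, p ! Suc i} \<in> E) \<and> {last p, hd p} \<in> E)"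

definition phylo_tree :: "'a set \<Rightarrow> 'a ptree \<Rightarrow> bool" where
  "phylo_tree X T \<longleftrightarrow> (case T of (V, E) \<Rightarrow>
     finite V \<and>
     E \<subseteq> {{u, v} | u v. u \<in> V \<and> v \<in> V \<and> u \<noteq> v} \<and>
     (\<forall>u\<in>V. \<forall>v\<in>V. \<exists>p. is_path E p u v) \<and>
     \<not> has_cycle E \<and>
     {v \<in> V. degree E v \<le> 1} = Inl ` X \<and>
     V - Inl ` X \<subseteq> range Inr \<and>
     (\<forall>v \<in> V - Inl ` X. 3 \<le> degree E v))"

definition binary_phylo_tree :: "'a set \<Rightarrow> 'a ptree \<Rightarrow> bool" where
  "binary_phylo_tree X T \<longleftrightarrow> phylo_tree X T \<and>
     (\<forall>v \<in> fst T - Inl ` X. degree (snd T) v = 3)"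

definition same_topology :: "'a set \<Rightarrow> 'a ptree \<Rightarrow> 'a ptree \<Rightarrow> bool" where
  "same_topology X T1 T2 \<longleftrightarrow> (\<exists>f. bij_betw f (fst T1) (fst T2) \<and>
     (\<forall>x\<in>X. f (Inl x) = Inl x) \<and>
     (\<forall>u\<in>fst T1. \<forall>v\<in>fst T1. {u, v} \<in> snd T1 \<longleftrightarrow> {f u, f v} \<in> snd T2))"

definition tree_metric :: "'v set set \<Rightarrow> ('v set \<Rightarrow> real) \<Rightarrow> 'v \<Rightarrow> 'v \<Rightarrow> real" where
  "tree_metric E w u v = (\<Sum>e \<in> path_edges (THE p. is_path E p u v). w e)"

text \<open>Minimum length of an interior (non-pendant) edge; +infinity if there is none.\<close>
definition wmin :: "'a set \<Rightarrow> 'a ptree \<Rightarrow> ('a vert set \<Rightarrow> real) \<Rightarrow> ereal" where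
  "wmin X T w = (INF e \<in> {e \<in> snd T. e \<inter> Inl ` X = {}}. ereal (w e))"

text \<open>Unordered pairs of distinct elements of X; dissimilarity maps are functions on them.\<close>
definition pairs :: "'a set \<Rightarrow> 'a set set" where
  "pairs X = {{x, y} | x y. x \<in> X \<and> y \<in> X \<and> x \<noteq> y}"

definition dissim_space :: "'a set \<Rightarrow> ('a set \<Rightarrow> real) measure" where
  "dissim_space X = (\<Pi>\<^sub>M p \<in> pairs X. (borel :: real measure))"

definition pair_dist :: "'a ptree \<Rightarrow> ('a vert set \<Rightarrow> real) \<Rightarrow> 'a set \<Rightarrow> real" where
  "pair_dist T w p = (THE r. \<exists>x y. p = {x, y} \<and> r = tree_metric (snd T) w (Inl x) (Inl y))"

definition recon_method :: "('a set \<Rightarrow> ('a set \<Rightarrow> real) \<Rightarrow> 'a ptree) \<Rightarrow> bool" where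
  "recon_method M \<longleftrightarrow>
     (\<forall>X \<delta>. finite X \<and> \<delta> \<in> space (dissim_space X) \<longrightarrow> phylo_tree X (M X \<delta>)) \<and>
     (\<forall>X T. finite X \<longrightarrow>
        {\<delta> \<in> space (dissim_space X). same_topology X (M X \<delta>) T} \<in> sets (dissim_space X))"

definition linf_safety_radius ::
  "('a set \<Rightarrow> ('a set \<Rightarrow> real) \<Rightarrow> 'a ptree) \<Rightarrow> nat \<Rightarrow> real \<Rightarrow> bool" where
  "linf_safety_radius M n \<rho> \<longleftrightarrow>
     (\<forall>X T w \<delta>. finite X \<and> card X = n \<and> binary_phylo_tree X T \<and>
        (\<forall>e \<in> snd T. 0 < w e) \<and> \<delta> \<in> space (dissim_space X) \<and>
        (\<forall>x\<in>X. \<forall>y\<in>X. x \<noteq> y \<longrightarrow>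
           ereal \<bar>\<delta> {x, y} - tree_metric (snd T) w (Inl x) (Inl y)\<bar> < ereal \<rho> * wmin X T w)
        \<longrightarrow> same_topology X (M X \<delta>) T)"

definition noise :: "'a set \<Rightarrow> real \<Rightarrow> ('a set \<Rightarrow> real) measure" where
  "noise X c = (\<Pi>\<^sub>M p \<in> pairs X.
      density lborel (normal_density 0 (sqrt (c\<^sup>2 / ln (real (card X))))))"

definition prob_correct ::
  "('a set \<Rightarrow> ('a set \<Rightarrow> real) \<Rightarrow> 'a ptree) \<Rightarrow> 'a set \<Rightarrow> 'a ptree \<Rightarrow> ('a vert set \<Rightarrow> real)
     \<Rightarrow> real \<Rightarrow> real" where
  "prob_correct M X T w c = measure (noise X c)
     {\<epsilon> \<in> space (noise X c).
        same_topology X (M X (\<lambda>p \<in> pairs X. pair_dist T w p + \<epsilon> p)) T}"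

definition stochastic_safety_radius ::
  "('a set \<Rightarrow> ('a set \<Rightarrow> real) \<Rightarrow> 'a ptree) \<Rightarrow> real \<Rightarrow> nat \<Rightarrow> real \<Rightarrow> bool" where
  "stochastic_safety_radius M \<eta> n s \<longleftrightarrow>
     (\<forall>X T w c. finite X \<and> card X = n \<and> binary_phylo_tree X T \<and>
        (\<forall>e \<in> snd T. 0 < w e) \<and> 0 < c \<and> ereal c < ereal s * wmin X T w
        \<longrightarrow> 1 - \<eta> \<le> prob_correct M X T w c)"

end

theory Submission
  imports Defs
begin


lemma nd_one: "0 < \<sigma> \<Longrightarrow> (\<integral>\<^sup>+ x. ennreal (normal_density \<mu> \<sigma> x) \<partial>lborel) = 1"
  using prob_space.emeasure_space_1[OF prob_space_normal_density[of \<sigma> \<mu>]]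
  by (simp add: emeasure_density)

lemma gauss_tail:
  fixes \<sigma> r :: real
  assumes s: "0 < \<sigma>" and r: "0 \<le> r"
  shows "emeasure (density lborel (normal_density 0 \<sigma>)) {x. r \<le> \<bar>x\<bar>} \<le> ennreal (2 * exp (-(r\<^sup>2) / (2 * \<sigma>\<^sup>2)))"
proof -
  define e where "e = exp (-(r\<^sup>2) / (2 * \<sigma>\<^sup>2))"
  have e0: "0 \<le> e" by (simp add: e_def)
  have pw: "normal_density 0 \<sigma> x * indicator {x. r \<le> \<bar>x\<bar>} x \<le> e * (normal_density r \<sigma> x + normal_density (-r) \<sigma> x)" for x
  proof (cases "r \<le> \<bar>x\<bar>")
    case False then show ?thesis using e0 by (simp add: indicator_def)
  next
    case True
    define K where "K = 1 / sqrt (2 * pi * \<sigma>\<^sup>2)"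
    have K0: "0 \<le> K" by (simp add: K_def)
    have s2: "0 < 2 * \<sigma>\<^sup>2" using s by simp
    have "normal_density 0 \<sigma> x \<le> e * normal_density r \<sigma> x \<or> normal_density 0 \<sigma> x \<le> e * normal_density (-r) \<sigma> x"
    proof (cases "0 \<le> x")
      case True
      with \<open>r \<le> \<bar>x\<bar>\<close> have "r * (x - r) \<ge> 0" using r by simp
      hence "-(x\<^sup>2) \<le> -(r\<^sup>2) - (x - r)\<^sup>2" by (simp add: power2_eq_square algebra_simps)
      note hh = this
      hence "-(x\<^sup>2) / (2 * \<sigma>\<^sup>2) \<le> -(r\<^sup>2) / (2 * \<sigma>\<^sup>2) + -((x - r)\<^sup>2) / (2 * \<sigma>\<^sup>2)"
        using divide_right_mono[OF hh less_imp_le[OF s2]] by (simp add: diff_divide_distrib)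
      hence "exp (-(x\<^sup>2) / (2 * \<sigma>\<^sup>2)) \<le> e * exp (-((x - r)\<^sup>2) / (2 * \<sigma>\<^sup>2))"
        unfolding e_def exp_add[symmetric] by simp
      hence "normal_density 0 \<sigma> x \<le> e * normal_density r \<sigma> x"
        unfolding normal_density_def using K0 mult_left_mono K_def
        by (smt (verit, ccfv_SIG) mult.left_commute)
      thus ?thesis by simp
    next
      case False
      with \<open>r \<le> \<bar>x\<bar>\<close> have "r * (x + r) \<le> 0" using r by (simp add: mult_nonneg_nonpos)
      hence "-(x\<^sup>2) \<le> -(r\<^sup>2) - (x + r)\<^sup>2" by (simp add: power2_eq_square algebra_simps)
      note hh = this
      hence "-(x\<^sup>2) / (2 * \<sigma>\<^sup>2) \<le> -(r\<^sup>2) / (2 * \<sigma>\<^sup>2) + -((x + r)\<^sup>2) / (2 * \<sigma>\<^sup>2)"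
        using divide_right_mono[OF hh less_imp_le[OF s2]] by (simp add: diff_divide_distrib)
      hence "exp (-(x\<^sup>2) / (2 * \<sigma>\<^sup>2)) \<le> e * exp (-((x + r)\<^sup>2) / (2 * \<sigma>\<^sup>2))"
        unfolding e_def exp_add[symmetric] by simp
      hence "normal_density 0 \<sigma> x \<le> e * normal_density (-r) \<sigma> x"
        unfolding normal_density_def using K0 mult_left_mono K_def
        by (smt (verit, ccfv_SIG) mult.left_commute)
      thus ?thesis by simp
    qed
    moreover have "0 \<le> e * normal_density r \<sigma> x" "0 \<le> e * normal_density (-r) \<sigma> x"
      using e0 by auto
    ultimately show ?thesis using True by (auto simp: indicator_def algebra_simps)
  qed
  have meas: "{x::real. r \<le> \<bar>x\<bar>} \<in> sets borel" by measurable
  have "emeasure (density lborel (normal_density 0 \<sigma>)) {x. r \<le> \<bar>x\<bar>}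
      = (\<integral>\<^sup>+ x. ennreal (normal_density 0 \<sigma> x) * indicator {x. r \<le> \<bar>x\<bar>} x \<partial>lborel)"
    using meas by (simp add: emeasure_density)
  also have "\<dots> \<le> (\<integral>\<^sup>+ x. ennreal e * (ennreal (normal_density r \<sigma> x) + ennreal (normal_density (-r) \<sigma> x)) \<partial>lborel)"
  proof (rule nn_integral_mono)
    fix x
    have "ennreal (normal_density 0 \<sigma> x) * indicator {x. r \<le> \<bar>x\<bar>} x = ennreal (normal_density 0 \<sigma> x * indicator {x. r \<le> \<bar>x\<bar>} x)"
      by (simp add: indicator_def)
    also have "\<dots> \<le> ennreal (e * (normal_density r \<sigma> x + normal_density (-r) \<sigma> x))"
      using pw by (rule ennreal_leI)
    also have "\<dots> = ennreal e * (ennreal (normal_density r \<sigma> x) + ennreal (normal_density (-r) \<sigma> x))"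
      using e0 by (simp add: ennreal_mult ennreal_plus)
    finally show "ennreal (normal_density 0 \<sigma> x) * indicator {x. r \<le> \<bar>x\<bar>} x \<le> \<dots>" .
  qed
  also have "\<dots> = ennreal e * ((\<integral>\<^sup>+ x. ennreal (normal_density r \<sigma> x) \<partial>lborel) + (\<integral>\<^sup>+ x. ennreal (normal_density (-r) \<sigma> x) \<partial>lborel))"
    apply (subst nn_integral_cmult)
     apply measurable
    apply (subst nn_integral_add)
      apply measurable
    done
  also have "\<dots> = ennreal e * 2"
    using s by (simp only: nd_one one_add_one)
  also have "\<dots> = ennreal (2 * e)"
    using e0 by (simp add: ennreal_mult' mult.commute)
  finally show ?thesis by (simp add: e_def)
qed



fun ch :: "'v set set \<Rightarrow> 'v list \<Rightarrow> bool" where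
  "ch E (x # y # zs) = ({x, y} \<in> E \<and> ch E (y # zs))"
| "ch E _ = True"

lemma ch_iff: "ch E xs \<longleftrightarrow> (\<forall>i. Suc i < length xs \<longrightarrow> {xs ! i, xs ! Suc i} \<in> E)"
proof (induction E xs rule: ch.induct)
  case (1 E x y zs)
  show ?case
  proof
    assume "ch E (x # y # zs)"
    then show "\<forall>i. Suc i < length (x # y # zs) \<longrightarrow> {(x # y # zs) ! i, (x # y # zs) ! Suc i} \<in> E"
      using 1 by (auto simp: less_Suc_eq_0_disj nth_Cons split: nat.splits)
  next
    assume h: "\<forall>i. Suc i < length (x # y # zs) \<longrightarrow> {(x # y # zs) ! i, (x # y # zs) ! Suc i} \<in> E"
    have "{x, y} \<in> E" using h[rule_format, of 0] by simp
    moreover have "ch E (y # zs)" unfolding 1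
    proof (intro allI impI)
      fix i assume "Suc i < length (y # zs)"
      then show "{(y # zs) ! i, (y # zs) ! Suc i} \<in> E" using h[rule_format, of "Suc i"] by simp
    qed
    ultimately show "ch E (x # y # zs)" by simp
  qed
qed auto

lemma ch_append: "xs \<noteq> [] \<Longrightarrow> ys \<noteq> [] \<Longrightarrow> ch E (xs @ ys) \<longleftrightarrow> ch E xs \<and> {last xs, hd ys} \<in> E \<and> ch E ys"
proof (induction xs rule: induct_list012)
  case (3 x y zs)
  then show ?case by simp
next
  case (2 x)
  then show ?case by (cases ys) auto
qed simp

lemma ch_take: "ch E xs \<Longrightarrow> ch E (take n xs)"
proof (induction E xs arbitrary: n rule: ch.induct)
  case (1 E x y zs)
  show ?case
  proof (cases n)
    case (Suc m)
    then show ?thesis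
    proof (cases m)
      case (Suc k)
      then show ?thesis using 1 \<open>n = Suc m\<close> 1(1)[of "Suc k"] by simp
    qed simp
  qed simp
qed (auto simp: take_Cons')

lemma ch_Cons: "ch E (x # xs) \<Longrightarrow> ch E xs"
  by (cases xs) auto

lemma is_path_ch: "is_path E p u v \<longleftrightarrow> p \<noteq> [] \<and> hd p = u \<and> last p = v \<and> distinct p \<and> ch E p"
  unfolding is_path_def ch_iff by blast

lemma cycle_aux:
  assumes "\<not> has_cycle E"
  shows "is_path E q b v \<Longrightarrow> is_path E p a v \<Longrightarrow> r \<noteq> [] \<Longrightarrow> distinct r \<Longrightarrow> ch E r
     \<Longrightarrow> {last r, a} \<in> E \<Longrightarrow> {hd r, b} \<in> E \<Longrightarrow> set r \<inter> set p = {} \<Longrightarrow> set r \<inter> set q = {}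
     \<Longrightarrow> (2 \<le> length r \<or> a \<noteq> b) \<Longrightarrow> False"
proof (induction q arbitrary: r b)
  case Nil
  then show ?case by (simp add: is_path_def)
next
  case (Cons b0 q'')
  have b0: "b0 = b" using Cons.prems(1) by (simp add: is_path_def)
  show ?case
  proof (cases "b \<in> set p")
    case True
    then obtain i where i: "i < length p" "p ! i = b" by (auto simp: in_set_conv_nth)
    have pne: "p \<noteq> []" and pa: "hd p = a" and pd: "distinct p" and pch: "ch E p"
      using Cons.prems(2) by (auto simp: is_path_ch)
    define C where "C = r @ take (Suc i) p"
    have tk: "take (Suc i) p \<noteq> []" using pne by simp
    have hdt: "hd (take (Suc i) p) = a" using pne pa by (cases p) auto
    have lastt: "last (take (Suc i) p) = b" using i by (simp add: take_Suc_conv_app_nth)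
    have "3 \<le> length C"
    proof (cases "2 \<le> length r")
      case True then show ?thesis using i by (simp add: C_def)
    next
      case False
      then have "a \<noteq> b" using Cons.prems(10) by simp
      then have "i \<noteq> 0" using i(2) pa hd_conv_nth[OF pne] by (cases i) auto
      then show ?thesis using Cons.prems(3) i by (cases r) (auto simp: C_def)
    qed
    moreover have "distinct C"
      using Cons.prems(4,8) pd set_take_subset[of "Suc i" p] by (auto simp: C_def)
    moreover have "ch E C"
      unfolding C_def using ch_append[OF Cons.prems(3) tk] Cons.prems(5,6) hdt ch_take[OF pch] by simp
    moreover have "{last C, hd C} \<in> E"
      using Cons.prems(3,7) lastt tk by (simp add: C_def insert_commute)
    ultimately have hc: "3 \<le> length C \<and> distinct C \<and> (\<forall>i. Suc i < length C \<longrightarrow> {C ! i, C ! Suc i} \<in> E) \<and> {last C, hd C} \<in> E"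
      unfolding ch_iff by blast
    have "has_cycle E" unfolding has_cycle_def by (rule exI[of _ C]) (rule hc)
    with assms show False by simp
  next
    case False
    have qd: "distinct (b0 # q'')" and qch: "ch E (b0 # q'')" and ql: "last (b0 # q'') = v"
      using Cons.prems(1) by (auto simp: is_path_ch)
    have "v \<in> set p" using Cons.prems(2) by (auto simp: is_path_ch)
    then have qne: "q'' \<noteq> []" using ql False b0 by auto
    have qpath: "is_path E q'' (hd q'') v"
      using qd qch ql qne by (auto simp: is_path_ch intro: ch_Cons)
    have e1: "{b, hd q''} \<in> E" using qch qne b0 by (cases q'') auto
    show False
    proof (rule Cons.IH[OF qpath Cons.prems(2), of "b # r"])
      show "distinct (b # r)" using Cons.prems(4,9) b0 by auto
      show "ch E (b # r)" using Cons.prems(3,5,7) by (cases r) (auto simp: insert_commute)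
      show "{last (b # r), a} \<in> E" using Cons.prems(3,6) by simp
      show "{hd (b # r), hd q''} \<in> E" using e1 by simp
      show "set (b # r) \<inter> set p = {}" using Cons.prems(8) False by auto
      show "set (b # r) \<inter> set q'' = {}" using Cons.prems(9) qd b0 by auto
      show "2 \<le> length (b # r) \<or> a \<noteq> hd q''" using Cons.prems(3) by (cases r) auto
    qed simp
  qed
qed

lemma path_unique:
  assumes "\<not> has_cycle E"
  shows "is_path E p u v \<Longrightarrow> is_path E q u v \<Longrightarrow> p = q"
proof (induction p arbitrary: q u)
  case Nil then show ?case by (simp add: is_path_def)
next
  case (Cons x p')
  obtain y q' where q: "q = y # q'" using Cons.prems(2) by (cases q) (auto simp: is_path_def)
  have xu: "x = u" "y = u" using Cons.prems q by (auto simp: is_path_def)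
  show ?case
  proof (cases "p' = []")
    case True
    then have "v = u" using Cons.prems(1) xu by (simp add: is_path_def)
    then have "q' = []" using Cons.prems(2) q xu
      by (cases q' rule: rev_cases) (auto simp: is_path_def)
    then show ?thesis using True q xu by simp
  next
    case pne: False
    have qne: "q' \<noteq> []"
    proof
      assume "q' = []"
      then have "v = u" using Cons.prems(2) q xu by (simp add: is_path_def)
      then show False using Cons.prems(1) pne xu by (cases p' rule: rev_cases) (auto simp: is_path_def)
    qed
    have pp: "is_path E p' (hd p') v" using Cons.prems(1) pne by (auto simp: is_path_ch intro: ch_Cons)
    have qp: "is_path E q' (hd q') v" using Cons.prems(2) q qne by (auto simp: is_path_ch intro: ch_Cons)
    show ?thesis
    proof (cases "hd p' = hd q'")
      case True
      then have "p' = q'" using Cons.IH[OF pp, of q'] qp by simp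
      then show ?thesis using q xu by simp
    next
      case False
      have "ch E (x # p')" using Cons.prems(1) unfolding is_path_ch by blast
      then have ea: "{u, hd p'} \<in> E" using pne xu by (cases p') auto
      have "ch E (y # q')" using Cons.prems(2) q unfolding is_path_ch by blast
      then have eb: "{u, hd q'} \<in> E" using qne xu by (cases q') auto
      have "u \<notin> set p'" using Cons.prems(1) xu by (simp add: is_path_def)
      moreover have "u \<notin> set q'" using Cons.prems(2) q xu by (simp add: is_path_def)
      ultimately have False
        apply -
        apply (rule cycle_aux[OF assms qp pp, of "[u]"])
        using ea eb False by (simp_all add: insert_commute)
      then show ?thesis ..
    qed
  qed
qed

lemma ch_rev: "ch E xs \<Longrightarrow> ch E (rev xs)"
proof (induction E xs rule: ch.induct)
  case (1 E x y zs)
  have "ch E (rev zs @ [y] @ [x])"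
    using 1 ch_append[of "rev zs @ [y]" "[x]" E] by (simp add: insert_commute)
  then show ?case by simp
qed auto

lemma path_edges_rev_sub: "path_edges (rev p) \<subseteq> path_edges p"
proof
  fix e assume "e \<in> path_edges (rev p)"
  then obtain i where i: "Suc i < length p" "e = {rev p ! i, rev p ! Suc i}"
    by (auto simp: path_edges_def)
  define j where "j = length p - 2 - i"
  have j: "Suc j < length p" using i by (simp add: j_def)
  have "rev p ! i = p ! Suc j" using i by (simp add: rev_nth j_def Suc_diff_Suc numeral_2_eq_2)
  moreover have "rev p ! Suc i = p ! j" using i by (simp add: rev_nth j_def)
  ultimately have "e = {p ! j, p ! Suc j}" using i by (simp add: insert_commute)
  then show "e \<in> path_edges p" using j by (auto simp: path_edges_def)
qed

lemma path_edges_rev: "path_edges (rev p) = path_edges p"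
  using path_edges_rev_sub[of p] path_edges_rev_sub[of "rev p"] by simp

lemma tree_metric_sym:
  assumes "\<not> has_cycle E" "is_path E p u v"
  shows "tree_metric E w u v = tree_metric E w v u"
proof -
  have rp: "is_path E (rev p) v u" using assms(2) by (auto simp: is_path_ch hd_rev last_rev intro: ch_rev)
  have "(THE p. is_path E p u v) = p"
    by (rule the_equality[where P="\<lambda>p. is_path E p u v", OF assms(2)]) (rule path_unique[OF assms(1) _ assms(2)])
  moreover have "(THE p. is_path E p v u) = rev p"
    by (rule the_equality[where P="\<lambda>p. is_path E p v u", OF rp]) (rule path_unique[OF assms(1) _ rp])
  ultimately show ?thesis unfolding tree_metric_def by (simp add: path_edges_rev)
qed



lemma pairs_sub_image: "pairs X \<subseteq> (\<lambda>(x, y). {x, y}) ` (X \<times> X)"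
proof
  fix p assume "p \<in> pairs X"
  then obtain x y where p: "p = {x, y}" "x \<in> X" "y \<in> X" unfolding pairs_def by blast
  show "p \<in> (\<lambda>(x, y). {x, y}) ` (X \<times> X)"
    by (rule image_eqI[of _ _ "(x, y)"]) (simp_all add: p)
qed
lemma finite_pairs: "finite X \<Longrightarrow> finite (pairs X)"
  by (rule finite_surj[OF finite_cartesian_product pairs_sub_image])

lemma comp_meas:
  assumes "p \<in> I"
  shows "(\<lambda>\<epsilon>. \<epsilon> p) \<in> borel_measurable (PiM I (\<lambda>_. density lborel f))"
proof -
  have "(\<lambda>\<epsilon>. \<epsilon> p) \<in> measurable (PiM I (\<lambda>_. density lborel f)) (density lborel f)"
    using measurable_component_singleton[OF assms, of "\<lambda>_. density lborel f"] by simp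
  moreover have "sets (density lborel f) = sets borel" by simp
  ultimately show ?thesis using measurable_cong_sets by blast
qed

lemma pairs_card: "p \<in> pairs X \<Longrightarrow> finite X \<Longrightarrow> 2 \<le> card X"
proof -
  assume p: "p \<in> pairs X" and f: "finite X"
  then obtain x y where "x \<in> X" "y \<in> X" "x \<noteq> y" by (auto simp: pairs_def)
  then have "card {x, y} \<le> card X" by (intro card_mono f) auto
  with \<open>x \<noteq> y\<close> show ?thesis by simp
qed

lemma pair_dist_eq:
  assumes pt: "phylo_tree X T" and x: "x \<in> X" and y: "y \<in> X"
  shows "pair_dist T w {x, y} = tree_metric (snd T) w (Inl x) (Inl y)"
proof -
  obtain V E where T: "T = (V, E)" by (cases T)
  have acyc: "\<not> has_cycle E" and conn: "\<forall>u\<in>V. \<forall>v\<in>V. \<exists>p. is_path E p u v"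
    and lv: "{v \<in> V. degree E v \<le> 1} = Inl ` X"
    using pt unfolding phylo_tree_def T by auto
  have inV: "Inl z \<in> V" if "z \<in> X" for z using lv that by blast
  have sym: "tree_metric E w (Inl a) (Inl b) = tree_metric E w (Inl b) (Inl a)" if ab: "a \<in> X" "b \<in> X" for a b
  proof -
    obtain p where "is_path E p (Inl a) (Inl b)" using conn inV ab by blast
    then show ?thesis using tree_metric_sym[OF acyc] by blast
  qed
  show ?thesis unfolding pair_dist_def T snd_conv
  proof (rule the_equality)
    show "\<exists>x' y'. {x, y} = {x', y'} \<and> tree_metric E w (Inl x) (Inl y) = tree_metric E w (Inl x') (Inl y')"
      by blast
  next
    fix r assume "\<exists>x' y'. {x, y} = {x', y'} \<and> r = tree_metric E w (Inl x') (Inl y')"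
    then obtain x' y' where "{x, y} = {x', y'}" "r = tree_metric E w (Inl x') (Inl y')" by blast
    then show "r = tree_metric E w (Inl x) (Inl y)"
      using sym[OF x y] by (auto simp: doubleton_eq_iff)
  qed
qed



lemma key:
  assumes rec: "recon_method M" and lin: "linf_safety_radius M n \<rho>"
    and fin: "finite X" and cX: "card X = n" and bt: "binary_phylo_tree X T"
    and wpos: "\<forall>e \<in> snd T. 0 < w e" and c: "0 < c"
    and wm: "wmin X T w = ereal m" and r0: "0 \<le> \<rho> * m"
  shows "1 - real (card (pairs X)) * (2 * exp (-((\<rho> * m)\<^sup>2) / (2 * (sqrt (c\<^sup>2 / ln (real n)))\<^sup>2)))
           \<le> prob_correct M X T w c"
proof -
  define \<sigma> where "\<sigma> = sqrt (c\<^sup>2 / ln (real n))"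
  define N where "N = (\<lambda>_::'a set. density lborel (normal_density 0 \<sigma>))"
  define \<Omega> where "\<Omega> = PiM (pairs X) N"
  define r where "r = \<rho> * m"
  define B where "B = exp (-(r\<^sup>2) / (2 * \<sigma>\<^sup>2))"
  have \<Omega>eq: "noise X c = \<Omega>" unfolding noise_def \<Omega>_def N_def \<sigma>_def cX ..
  have pt: "phylo_tree X T" using bt by (simp add: binary_phylo_tree_def)
  have sigpos: "0 < \<sigma>" if "pairs X \<noteq> {}"
  proof -
    from that obtain p where "p \<in> pairs X" by blast
    then have "2 \<le> n" using pairs_card fin cX by blast
    then have "0 < ln (real n)" by simp
    then show ?thesis using c by (simp add: \<sigma>_def)
  qed
  have ps: "prob_space \<Omega>" unfolding \<Omega>_def
    by (rule prob_space_PiM) (use sigpos in \<open>auto simp: N_def intro: prob_space_normal_density\<close>)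
  interpret P: prob_space \<Omega> by (rule ps)
  define \<delta> where "\<delta> = (\<lambda>\<epsilon>. \<lambda>p \<in> pairs X. pair_dist T w p + \<epsilon> p)"
  have \<delta>meas: "\<delta> \<in> measurable \<Omega> (dissim_space X)"
    unfolding \<delta>_def dissim_space_def
  proof (rule measurable_restrict)
    fix p assume "p \<in> pairs X"
    then have "(\<lambda>\<epsilon>. \<epsilon> p) \<in> borel_measurable \<Omega>" unfolding \<Omega>_def N_def by (rule comp_meas)
    then show "(\<lambda>\<epsilon>. pair_dist T w p + \<epsilon> p) \<in> borel_measurable \<Omega>" by measurable
  qed
  define S where "S = {\<epsilon> \<in> space \<Omega>. same_topology X (M X (\<delta> \<epsilon>)) T}"
  have Smeas: "S \<in> sets \<Omega>"
  proof -
    have A: "{d \<in> space (dissim_space X). same_topology X (M X d) T} \<in> sets (dissim_space X)"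
      using rec fin unfolding recon_method_def by blast
    have "S = \<delta> -` {d \<in> space (dissim_space X). same_topology X (M X d) T} \<inter> space \<Omega>"
      unfolding S_def using measurable_space[OF \<delta>meas] by auto
    then show ?thesis using measurable_sets[OF \<delta>meas A] by simp
  qed
  have pc: "prob_correct M X T w c = P.prob S"
    unfolding prob_correct_def \<Omega>eq S_def \<delta>_def ..
  define D where "D = (\<lambda>p. {\<epsilon> \<in> space \<Omega>. \<epsilon> p \<in> {x. r \<le> \<bar>x\<bar>}})"
  have Dmeas: "D p \<in> sets \<Omega>" if "p \<in> pairs X" for p
  proof -
    have "(\<lambda>\<epsilon>. \<epsilon> p) \<in> borel_measurable \<Omega>" unfolding \<Omega>_def N_def using that by (rule comp_meas)
    moreover have "{x::real. r \<le> \<bar>x\<bar>} \<in> sets borel" by measurable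
    ultimately have "(\<lambda>\<epsilon>. \<epsilon> p) -` {x. r \<le> \<bar>x\<bar>} \<inter> space \<Omega> \<in> sets \<Omega>" by (rule measurable_sets)
    moreover have "D p = (\<lambda>\<epsilon>. \<epsilon> p) -` {x. r \<le> \<bar>x\<bar>} \<inter> space \<Omega>" by (auto simp: D_def)
    ultimately show ?thesis by simp
  qed
  have sub: "space \<Omega> - S \<subseteq> (\<Union>p\<in>pairs X. D p)"
  proof
    fix \<epsilon> assume e: "\<epsilon> \<in> space \<Omega> - S"
    show "\<epsilon> \<in> (\<Union>p\<in>pairs X. D p)"
    proof (rule ccontr)
      assume "\<epsilon> \<notin> (\<Union>p\<in>pairs X. D p)"
      then have small: "\<bar>\<epsilon> p\<bar> < r" if "p \<in> pairs X" for p using e that by (auto simp: D_def)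
      have "same_topology X (M X (\<delta> \<epsilon>)) T"
      proof (rule lin[unfolded linf_safety_radius_def, rule_format], intro conjI)
        show "finite X" "card X = n" "binary_phylo_tree X T" "\<forall>e\<in>snd T. 0 < w e"
          using fin cX bt wpos by auto
        show "\<delta> \<epsilon> \<in> space (dissim_space X)" using measurable_space[OF \<delta>meas] e by auto
        show "\<forall>x\<in>X. \<forall>y\<in>X. x \<noteq> y \<longrightarrow>
           ereal \<bar>\<delta> \<epsilon> {x, y} - tree_metric (snd T) w (Inl x) (Inl y)\<bar> < ereal \<rho> * wmin X T w"
        proof (intro ballI impI)
          fix x y assume xy: "x \<in> X" "y \<in> X" "x \<noteq> y"
          then have pp: "{x, y} \<in> pairs X" by (auto simp: pairs_def)
          have "\<delta> \<epsilon> {x, y} - tree_metric (snd T) w (Inl x) (Inl y) = \<epsilon> {x, y}"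
            using pp pair_dist_eq[OF pt xy(1,2), of w] by (simp add: \<delta>_def)
          then show "ereal \<bar>\<delta> \<epsilon> {x, y} - tree_metric (snd T) w (Inl x) (Inl y)\<bar> < ereal \<rho> * wmin X T w"
            using small[OF pp] by (simp add: wm r_def)
        qed
      qed
      then show False using e by (simp add: S_def)
    qed
  qed
  have Dle: "P.prob (D p) \<le> 2 * B" if p: "p \<in> pairs X" for p
  proof -
    have sp: "0 < \<sigma>" using sigpos p by blast
    interpret NP: prob_space "N i" for i
      unfolding N_def by (rule prob_space_normal_density[OF sp])
    interpret PP: product_prob_space N "pairs X"
      by unfold_locales
    have "emeasure \<Omega> (D p) = emeasure (N p) {x. r \<le> \<bar>x\<bar>}"
      unfolding \<Omega>_def D_def by (rule PP.emeasure_PiM_Collect_single[OF p]) (simp add: N_def)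
    also have "\<dots> \<le> ennreal (2 * B)" unfolding N_def B_def r_def
      by (rule gauss_tail[OF sp r0])
    finally have "ennreal (P.prob (D p)) \<le> ennreal (2 * B)" by (simp add: P.emeasure_eq_measure)
    then show ?thesis by (simp add: B_def)
  qed
  have finp: "finite (pairs X)" using fin by (rule finite_pairs)
  have "P.prob (space \<Omega> - S) \<le> P.prob (\<Union>p\<in>pairs X. D p)"
    using sub Dmeas finp by (intro P.finite_measure_mono) auto
  also have "\<dots> \<le> (\<Sum>p\<in>pairs X. P.prob (D p))"
  proof (rule P.finite_measure_subadditive_finite)
    show "finite (pairs X)" by (rule finp)
    show "D ` pairs X \<subseteq> sets \<Omega>" using Dmeas by auto
  qed
  also have "\<dots> \<le> (\<Sum>p\<in>pairs X. 2 * B)" by (rule sum_mono) (rule Dle)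
  also have "\<dots> = real (card (pairs X)) * (2 * B)" by simp
  finally have "P.prob (space \<Omega> - S) \<le> real (card (pairs X)) * (2 * B)" .
  moreover have "P.prob (space \<Omega> - S) = 1 - P.prob S" using Smeas by (rule P.prob_compl)
  ultimately show ?thesis unfolding pc B_def r_def \<sigma>_def by simp
qed



lemma wmin_cases:
  assumes pt: "phylo_tree X T" and wpos: "\<forall>e \<in> snd T. 0 < w e"
  shows "wmin X T w = \<infinity> \<or> (\<exists>m>0. wmin X T w = ereal m)"
proof -
  obtain V E where T: "T = (V, E)" by (cases T)
  have fV: "finite V" and Esub: "E \<subseteq> {{u, v} | u v. u \<in> V \<and> v \<in> V \<and> u \<noteq> v}"
    using pt unfolding phylo_tree_def T by auto
  have "E \<subseteq> Pow V" using Esub by blast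
  then have fE: "finite E" using fV by (meson finite_Pow_iff finite_subset)
  define I where "I = {e \<in> E. e \<inter> Inl ` X = {}}"
  have fI: "finite I" using fE by (simp add: I_def)
  have wm: "wmin X T w = (INF e \<in> I. ereal (w e))" unfolding wmin_def T I_def by simp
  show ?thesis
  proof (cases "I = {}")
    case True then show ?thesis using wm by (simp add: top_ereal_def)
  next
    case False
    define e0 where "e0 = arg_min_on w I"
    have e0: "e0 \<in> I" "\<And>e. e \<in> I \<Longrightarrow> w e0 \<le> w e"
      using arg_min_if_finite[OF fI False, of w] unfolding e0_def by (auto simp: not_less)
    have "wmin X T w = ereal (w e0)"
      unfolding wm
    proof (rule antisym)
      show "(INF e\<in>I. ereal (w e)) \<le> ereal (w e0)" by (rule INF_lower[OF e0(1)])
      show "ereal (w e0) \<le> (INF e\<in>I. ereal (w e))" by (rule INF_greatest) (simp add: e0(2))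
    qed
    moreover have "0 < w e0" using wpos e0(1) by (auto simp: I_def T)
    ultimately show ?thesis by blast
  qed
qed

lemma all_correct:
  assumes rec: "recon_method M" and lin: "linf_safety_radius M n \<rho>" and rp: "0 < \<rho>"
    and fin: "finite X" and cX: "card X = n" and bt: "binary_phylo_tree X T"
    and wpos: "\<forall>e \<in> snd T. 0 < w e" and c: "0 < c"
    and wm: "wmin X T w = \<infinity>"
  shows "prob_correct M X T w c = 1"
proof -
  define \<sigma> where "\<sigma> = sqrt (c\<^sup>2 / ln (real n))"
  define N where "N = (\<lambda>_::'a set. density lborel (normal_density 0 \<sigma>))"
  define \<Omega> where "\<Omega> = PiM (pairs X) N"
  have \<Omega>eq: "noise X c = \<Omega>" unfolding noise_def \<Omega>_def N_def \<sigma>_def cX ..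
  have sigpos: "0 < \<sigma>" if "pairs X \<noteq> {}"
  proof -
    from that obtain p where "p \<in> pairs X" by blast
    then have "2 \<le> n" using pairs_card fin cX by blast
    then have "0 < ln (real n)" by simp
    then show ?thesis using c by (simp add: \<sigma>_def)
  qed
  have ps: "prob_space \<Omega>" unfolding \<Omega>_def
    by (rule prob_space_PiM) (use sigpos in \<open>auto simp: N_def intro: prob_space_normal_density\<close>)
  interpret P: prob_space \<Omega> by (rule ps)
  define \<delta> where "\<delta> = (\<lambda>\<epsilon>. \<lambda>p \<in> pairs X. pair_dist T w p + \<epsilon> p)"
  have \<delta>meas: "\<delta> \<in> measurable \<Omega> (dissim_space X)"
    unfolding \<delta>_def dissim_space_def
  proof (rule measurable_restrict)
    fix p assume "p \<in> pairs X"
    then have "(\<lambda>\<epsilon>. \<epsilon> p) \<in> borel_measurable \<Omega>" unfolding \<Omega>_def N_def by (rule comp_meas)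
    then show "(\<lambda>\<epsilon>. pair_dist T w p + \<epsilon> p) \<in> borel_measurable \<Omega>" by measurable
  qed
  have S: "{\<epsilon> \<in> space \<Omega>. same_topology X (M X (\<delta> \<epsilon>)) T} = space \<Omega>"
  proof (intro set_eqI iffI)
    fix \<epsilon> assume e: "\<epsilon> \<in> space \<Omega>"
    have "same_topology X (M X (\<delta> \<epsilon>)) T"
    proof (rule lin[unfolded linf_safety_radius_def, rule_format], intro conjI)
      show "finite X" "card X = n" "binary_phylo_tree X T" "\<forall>e\<in>snd T. 0 < w e"
        using fin cX bt wpos by auto
      show "\<delta> \<epsilon> \<in> space (dissim_space X)" using measurable_space[OF \<delta>meas] e by auto
      show "\<forall>x\<in>X. \<forall>y\<in>X. x \<noteq> y \<longrightarrow>
         ereal \<bar>\<delta> \<epsilon> {x, y} - tree_metric (snd T) w (Inl x) (Inl y)\<bar> < ereal \<rho> * wmin X T w"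
        using rp by (simp add: wm)
    qed
    then show "\<epsilon> \<in> {\<epsilon> \<in> space \<Omega>. same_topology X (M X (\<delta> \<epsilon>)) T}" using e by simp
  qed simp
  have "prob_correct M X T w c = P.prob {\<epsilon> \<in> space \<Omega>. same_topology X (M X (\<delta> \<epsilon>)) T}"
    unfolding prob_correct_def \<Omega>eq \<delta>_def ..
  also have "\<dots> = 1" unfolding S by (rule P.prob_space)
  finally show ?thesis .
qed

lemma card_pairs_le: "finite X \<Longrightarrow> card (pairs X) \<le> (card X)\<^sup>2"
proof -
  assume fin: "finite X"
  have "card (pairs X) \<le> card ((\<lambda>(x, y). {x, y}) ` (X \<times> X))"
    using fin by (intro card_mono pairs_sub_image) auto
  also have "\<dots> \<le> card (X \<times> X)" by (rule card_image_le) (use fin in simp)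
  finally show ?thesis by (simp add: card_cartesian_product power2_eq_square)
qed

lemma arith1:
  fixes c s m L \<rho> :: real
  assumes "0 < c" "c < s * m" "0 < m" "0 < L" "0 < s"
  shows "\<rho>\<^sup>2 * L / (2 * s\<^sup>2) \<le> (\<rho> * m)\<^sup>2 / (2 * (sqrt (c\<^sup>2 / L))\<^sup>2)"
proof -
  have sq: "(sqrt (c\<^sup>2 / L))\<^sup>2 = c\<^sup>2 / L" using assms by simp
  have "\<rho>\<^sup>2 * L / (2 * s\<^sup>2) = (\<rho> * m)\<^sup>2 * L / (2 * (s * m)\<^sup>2)"
    using assms by (simp add: power_mult_distrib field_simps)
  also have "\<dots> \<le> (\<rho> * m)\<^sup>2 * L / (2 * c\<^sup>2)"
  proof (rule divide_left_mono)
    show "0 \<le> (\<rho> * m)\<^sup>2 * L" using assms by simp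
    have "c\<^sup>2 \<le> (s * m)\<^sup>2" using assms by (intro power_mono) auto
    then show "2 * c\<^sup>2 \<le> 2 * (s * m)\<^sup>2" by simp
    show "0 < 2 * (s * m)\<^sup>2 * (2 * c\<^sup>2)" using assms by simp
  qed
  also have "\<dots> = (\<rho> * m)\<^sup>2 / (2 * (sqrt (c\<^sup>2 / L))\<^sup>2)"
    unfolding sq using assms by (simp add: field_simps)
  finally show ?thesis .
qed

lemma bound_F:
  assumes rec: "recon_method M" and lin: "linf_safety_radius M n \<rho>" and rp: "0 < \<rho>"
    and fin: "finite X" and cX: "card X = n" and bt: "binary_phylo_tree X T"
    and wpos: "\<forall>e \<in> snd T. 0 < w e" and c: "0 < c" and s: "0 < s"
    and cs: "ereal c < ereal s * wmin X T w"
  shows "1 - real (card (pairs X)) * (2 * exp (-(\<rho>\<^sup>2 * ln (real n) / (2 * s\<^sup>2)))) \<le> prob_correct M X T w c"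
proof -
  have pt: "phylo_tree X T" using bt by (simp add: binary_phylo_tree_def)
  have nn: "0 \<le> real (card (pairs X)) * (2 * exp (-(\<rho>\<^sup>2 * ln (real n) / (2 * s\<^sup>2))))" by simp
  from wmin_cases[OF pt wpos] show ?thesis
  proof
    assume "wmin X T w = \<infinity>"
    then have "prob_correct M X T w c = 1" using all_correct[OF rec lin rp fin cX bt wpos c] by simp
    then show ?thesis using nn by simp
  next
    assume "\<exists>m>0. wmin X T w = ereal m"
    then obtain m where m: "0 < m" "wmin X T w = ereal m" by blast
    have k: "1 - real (card (pairs X)) * (2 * exp (-((\<rho> * m)\<^sup>2) / (2 * (sqrt (c\<^sup>2 / ln (real n)))\<^sup>2)))
           \<le> prob_correct M X T w c"
      by (rule key[OF rec lin fin cX bt wpos c m(2)]) (use rp m in simp)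
    show ?thesis
    proof (cases "pairs X = {}")
      case True then show ?thesis using k by simp
    next
      case False
      then obtain p where "p \<in> pairs X" by blast
      then have "2 \<le> n" using pairs_card fin cX by blast
      then have L: "0 < ln (real n)" by simp
      have csm: "c < s * m" using cs m by simp
      have "\<rho>\<^sup>2 * ln (real n) / (2 * s\<^sup>2) \<le> (\<rho> * m)\<^sup>2 / (2 * (sqrt (c\<^sup>2 / ln (real n)))\<^sup>2)"
        by (rule arith1[OF c csm m(1) L s])
      then have "exp (-((\<rho> * m)\<^sup>2) / (2 * (sqrt (c\<^sup>2 / ln (real n)))\<^sup>2)) \<le> exp (-(\<rho>\<^sup>2 * ln (real n) / (2 * s\<^sup>2)))"
        by (simp only: minus_divide_left[symmetric] exp_le_cancel_iff neg_le_iff_le)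
      then have "real (card (pairs X)) * (2 * exp (-((\<rho> * m)\<^sup>2) / (2 * (sqrt (c\<^sup>2 / ln (real n)))\<^sup>2)))
          \<le> real (card (pairs X)) * (2 * exp (-(\<rho>\<^sup>2 * ln (real n) / (2 * s\<^sup>2))))"
        by (intro mult_left_mono) auto
      then show ?thesis using k by linarith
    qed
  qed
qed



lemma choose_s:
  fixes \<eta> \<rho> :: real
  assumes "0 < \<eta>" "2 \<le> n" "0 < \<rho>"
  shows "\<exists>s>0. real n ^ 2 * (2 * exp (-(\<rho>\<^sup>2 * ln (real n) / (2 * s\<^sup>2)))) \<le> \<eta>"
proof -
  define L where "L = ln (real n)"
  have L: "0 < L" using assms by (simp add: L_def)
  have n0: "0 < real n" using assms by simp
  define A where "A = max 1 (ln (2 * real n ^ 2 / \<eta>))"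
  have A: "1 \<le> A" "ln (2 * real n ^ 2 / \<eta>) \<le> A" by (auto simp: A_def)
  define s where "s = sqrt (\<rho>\<^sup>2 * L / (2 * A))"
  have s: "0 < s" using assms L A by (simp add: s_def)
  have s2: "s\<^sup>2 = \<rho>\<^sup>2 * L / (2 * A)" using assms L A by (simp add: s_def)
  have e: "\<rho>\<^sup>2 * L / (2 * s\<^sup>2) = A" unfolding s2 using assms L A by (simp add: field_simps)
  have q: "0 < 2 * real n ^ 2 / \<eta>" using assms n0 by simp
  have "exp (-A) \<le> exp (- ln (2 * real n ^ 2 / \<eta>))" using A by simp
  also have "\<dots> = \<eta> / (2 * real n ^ 2)" using q by (simp add: exp_minus exp_ln)
  finally have "real n ^ 2 * (2 * exp (-A)) \<le> real n ^ 2 * (2 * (\<eta> / (2 * real n ^ 2)))"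
    by (intro mult_left_mono) auto
  also have "\<dots> = \<eta>" using n0 by (simp add: field_simps)
  finally show ?thesis using s e unfolding L_def by (intro exI[of _ s]) auto
qed

lemma asymp:
  fixes \<eta> \<theta> :: real
  assumes "0 < \<eta>" "0 < \<theta>" "\<theta> < 1"
  shows "\<exists>N. \<forall>n\<ge>N. \<forall>\<rho>>0. 2 \<le> n \<and>
     real n ^ 2 * (2 * exp (-(\<rho>\<^sup>2 * ln (real n) / (2 * (\<theta> * (\<rho> / 2))\<^sup>2)))) \<le> \<eta>"
proof -
  define a where "a = 2 / \<theta>\<^sup>2 - 2"
  have "\<theta>\<^sup>2 < 1" using assms by (simp add: power_less_one_iff abs_less_iff)
  then have "1 < 1 / \<theta>\<^sup>2" using assms by (simp add: field_simps)
  then have a: "0 < a" by (simp add: a_def)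
  define y where "y = (2 / \<eta>) powr (1 / a)"
  define N where "N = max 2 (nat \<lceil>y\<rceil>)"
  show ?thesis
  proof (intro exI[of _ N] allI impI conjI)
    fix n :: nat and \<rho> :: real assume nN: "N \<le> n" and rp: "0 < \<rho>"
    show n2: "2 \<le> n" using nN by (simp add: N_def)
    have n0: "0 < real n" using n2 by simp
    define L where "L = ln (real n)"
    have ny: "y \<le> real n"
    proof -
      have "y \<le> real (nat \<lceil>y\<rceil>)" by linarith
      also have "\<dots> \<le> real n" using nN by (simp add: N_def)
      finally show ?thesis .
    qed
    have y0: "0 \<le> y" by (simp add: y_def)
    have "y powr a \<le> real n powr a" using powr_mono2[OF less_imp_le[OF a] y0 ny] .
    moreover have "y powr a = 2 / \<eta>" unfolding y_def using a assms by (simp add: powr_powr)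
    ultimately have npa: "2 / \<eta> \<le> real n powr a" by simp
    have npa': "real n powr a = exp (a * L)" using n0 by (simp add: powr_def L_def)
    have h1: "\<rho>\<^sup>2 * L / (2 * (\<theta> * (\<rho> / 2))\<^sup>2) = 2 * L / \<theta>\<^sup>2"
      using rp assms by (simp add: field_simps power2_eq_square)
    have h2: "real n ^ 2 = exp (2 * L)"
    proof -
      have "exp (2 * L) = exp (L + L)" by simp
      also have "\<dots> = exp L * exp L" by (rule exp_add)
      also have "exp L = real n" using n0 by (simp add: L_def)
      finally show ?thesis by (simp add: power2_eq_square)
    qed
    have "real n ^ 2 * (2 * exp (-(2 * L / \<theta>\<^sup>2))) = 2 * exp (2 * L + -(2 * L / \<theta>\<^sup>2))"
      unfolding h2 exp_add by simp
    also have "2 * L + -(2 * L / \<theta>\<^sup>2) = - (a * L)" by (simp add: a_def algebra_simps)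
    also have "2 * exp (- (a * L)) = 2 / exp (a * L)" by (simp add: exp_minus field_simps)
    also have "\<dots> \<le> \<eta>"
    proof -
      have "2 / \<eta> \<le> exp (a * L)" using npa npa' by simp
      then show ?thesis using assms by (simp add: field_simps)
    qed
    finally show "real n ^ 2 * (2 * exp (-(\<rho>\<^sup>2 * ln (real n) / (2 * (\<theta> * (\<rho> / 2))\<^sup>2)))) \<le> \<eta>"
      using h1 unfolding L_def by simp
  qed
qed

lemma ssr_from_bound:
  fixes M :: "'a set \<Rightarrow> ('a set \<Rightarrow> real) \<Rightarrow> 'a ptree"
  assumes rec: "recon_method M" and lin: "linf_safety_radius M n \<rho>" and rp: "0 < \<rho>"
    and s: "0 < s" and \<eta>: "0 < \<eta>"
    and bnd: "2 \<le> n \<Longrightarrow> real n ^ 2 * (2 * exp (-(\<rho>\<^sup>2 * ln (real n) / (2 * s\<^sup>2)))) \<le> \<eta>"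
  shows "stochastic_safety_radius M \<eta> n s"
  unfolding stochastic_safety_radius_def
proof (intro allI impI, elim conjE)
  fix X :: "'a set" and T w c
  assume fin: "finite X" and cX: "card X = n" and bt: "binary_phylo_tree X T"
    and wpos: "\<forall>e\<in>snd T. 0 < w e" and c: "0 < c" and cs: "ereal c < ereal s * wmin X T w"
  have F: "1 - real (card (pairs X)) * (2 * exp (-(\<rho>\<^sup>2 * ln (real n) / (2 * s\<^sup>2)))) \<le> prob_correct M X T w c"
    by (rule bound_F[OF rec lin rp fin cX bt wpos c s cs])
  show "1 - \<eta> \<le> prob_correct M X T w c"
  proof (cases "pairs X = {}")
    case True then show ?thesis using F \<eta> by simp
  next
    case False
    then obtain p where "p \<in> pairs X" by blast
    then have n2: "2 \<le> n" using pairs_card fin cX by blast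
    have "real (card (pairs X)) \<le> real n ^ 2" using card_pairs_le[OF fin] cX by (simp flip: of_nat_power)
    then have "real (card (pairs X)) * (2 * exp (-(\<rho>\<^sup>2 * ln (real n) / (2 * s\<^sup>2))))
        \<le> real n ^ 2 * (2 * exp (-(\<rho>\<^sup>2 * ln (real n) / (2 * s\<^sup>2))))"
      by (intro mult_right_mono) auto
    then show ?thesis using F bnd[OF n2] by linarith
  qed
qed

theorem proposition2:
  fixes M :: "'a set \<Rightarrow> ('a set \<Rightarrow> real) \<Rightarrow> 'a ptree" and \<rho> :: "nat \<Rightarrow> real"
  assumes "recon_method M"
    and "\<And>n. 0 < \<rho> n"
    and "\<And>n. linf_safety_radius M n (\<rho> n)"
  shows "(\<forall>\<eta>>0. \<forall>n. \<exists>s>0. stochastic_safety_radius M \<eta> n s) \<and>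
         (\<forall>\<eta>>0. \<forall>\<theta>. 0 < \<theta> \<and> \<theta> < 1 \<longrightarrow>
            (\<exists>N. \<forall>n\<ge>N. stochastic_safety_radius M \<eta> n (\<theta> * (\<rho> n / 2))))"
proof (intro conjI allI impI)
  fix \<eta> :: real and n :: nat assume \<eta>: "0 < \<eta>"
  show "\<exists>s>0. stochastic_safety_radius M \<eta> n s"
  proof (cases "2 \<le> n")
    case False
    have "stochastic_safety_radius M \<eta> n 1"
      by (rule ssr_from_bound[OF assms(1) assms(3) assms(2)]) (use \<eta> False in auto)
    then show ?thesis by (intro exI[of _ 1]) simp
  next
    case True
    obtain s where s: "0 < s" "real n ^ 2 * (2 * exp (-((\<rho> n)\<^sup>2 * ln (real n) / (2 * s\<^sup>2)))) \<le> \<eta>"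
      using choose_s[OF \<eta> True assms(2)] by blast
    have "stochastic_safety_radius M \<eta> n s"
      by (rule ssr_from_bound[OF assms(1) assms(3) assms(2) s(1) \<eta>]) (use s in auto)
    then show ?thesis using s by blast
  qed
next
  fix \<eta> \<theta> :: real assume \<eta>: "0 < \<eta>" and th: "0 < \<theta> \<and> \<theta> < 1"
  obtain N where N: "\<And>n \<rho>. N \<le> n \<Longrightarrow> 0 < \<rho> \<Longrightarrow> 2 \<le> n \<and>
     real n ^ 2 * (2 * exp (-(\<rho>\<^sup>2 * ln (real n) / (2 * (\<theta> * (\<rho> / 2))\<^sup>2)))) \<le> \<eta>"
    using asymp[OF \<eta>, of \<theta>] th by blast
  show "\<exists>N. \<forall>n\<ge>N. stochastic_safety_radius M \<eta> n (\<theta> * (\<rho> n / 2))"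
  proof (intro exI[of _ N] allI impI)
    fix n assume nN: "N \<le> n"
    have sp: "0 < \<theta> * (\<rho> n / 2)" using th assms(2)[of n] by simp
    show "stochastic_safety_radius M \<eta> n (\<theta> * (\<rho> n / 2))"
      by (rule ssr_from_bound[OF assms(1) assms(3) assms(2) sp \<eta>]) (use N[OF nN assms(2)] in auto)
  qed
qed

end
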